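(* Let $k\ge 1$ and let $T$ be an array whose positions $0,\dots,2k-1$ hold $n=2k$ elements, the first $k$ forming one list and the last $k$ another. Run $\textsc{Merge}(T,0,k,k)$ (defined in the context). Then the expected number of random bits it consumes to produce the merged array of size $n$ is $n+\Theta(\sqrt{n}\log n)$ as $n\to\infty$.
   Context: The procedure $\textsc{Merge}(T,s,n_1,n_2)$: set $i\gets s$, $j\gets s+n_1$, $n\gets s+n_1+n_2$. Repeat: draw an independent fair random bit; if it is $0$, then break out of the loop if $i=j$; if it is $1$, then break out of the loop if $j=n$, and otherwise swap $T[i]$ and $T[j]$ and set $j\gets j+1$; in either non-breaking case set $i\gets i+1$. After the loop, while $i<n$: draw an integer $m$ uniformly at random from $\{s,\dots,i\}$ (independently of everything else), swap $T[i]$ and $T[m]$, and set $i\gets i+1$. Cost model: each fair bit drawn in the first loop costs one random bit, and drawing a uniform integer from a set of $K$ elements costs $\lceil \log_2 K\rceil$ random bits. *)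

theory Defs
  imports "HOL-Probability.Probability" "HOL-Library.Landau_Symbols"
begin

definition swap :: "'a list \<Rightarrow> nat \<Rightarrow> nat \<Rightarrow> 'a list" where
  "swap T a b = T[a := T ! b, b := T ! a]"

text \<open>Cost of drawing a uniform integer from a set of K elements.\<close>
definition unif_cost :: "nat \<Rightarrow> nat" where
  "unif_cost K = nat \<lceil>log 2 (real K)\<rceil>"

text \<open>Returns (array, final i, number of bits drawn).
  Breaking tests are written "j \<le> i" (for i = j) and "n \<le> j" (for j = n);
  these coincide with the original tests under the loop invariant i \<le> j \<le> n.\<close>
function merge_loop1 :: "'a list \<Rightarrow> nat \<Rightarrow> nat \<Rightarrow> nat \<Rightarrow> ('a list \<times> nat \<times> nat) pmf" where
  "merge_loop1 T i j n =
     do { b \<leftarrow> bernoulli_pmf (1 / 2);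
          if \<not> b then
            (if j \<le> i then return_pmf (T, i, 1)
             else map_pmf (\<lambda>(T', i', c). (T', i', c + 1)) (merge_loop1 T (i + 1) j n))
          else
            (if n \<le> j then return_pmf (T, i, 1)
             else map_pmf (\<lambda>(T', i', c). (T', i', c + 1)) (merge_loop1 (swap T i j) (i + 1) (j + 1) n)) }"
  by pat_completeness auto
termination
  by (relation "Wellfounded.measure (\<lambda>(T, i, j, n). (j - i) + (n - j))") auto

function merge_loop2 :: "'a list \<Rightarrow> nat \<Rightarrow> nat \<Rightarrow> nat \<Rightarrow> ('a list \<times> nat) pmf" where
  "merge_loop2 T s i n =
     (if i < n then
        do { m \<leftarrow> pmf_of_set {s..i};
             map_pmf (\<lambda>(T', c). (T', c + unif_cost (card {s..i})))
               (merge_loop2 (swap T i m) s (i + 1) n) }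
      else return_pmf (T, 0))"
  by pat_completeness auto
termination
  by (relation "Wellfounded.measure (\<lambda>(T, s, i, n). n - i)") auto

definition merge :: "'a list \<Rightarrow> nat \<Rightarrow> nat \<Rightarrow> nat \<Rightarrow> ('a list \<times> nat) pmf" where
  "merge T s n1 n2 =
     do { (T1, i, c1) \<leftarrow> merge_loop1 T s (s + n1) (s + n1 + n2);
          (T2, c2) \<leftarrow> merge_loop2 T1 s i (s + n1 + n2);
          return_pmf (T2, c1 + c2) }"

definition expected_bits :: "'a list \<Rightarrow> nat \<Rightarrow> nat \<Rightarrow> nat \<Rightarrow> real" where
  "expected_bits T s n1 n2 = measure_pmf.expectation (merge T s n1 n2) (\<lambda>(T', c). real c)"

end

theory Submission imports Defs begin

lemma exp_const_on_support:
  assumes "\<And>x. x \<in> set_pmf p \<Longrightarrow> h x = (c::real)"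
  shows "measure_pmf.expectation p h = c"
proof -
  have "measure_pmf.expectation p h = measure_pmf.expectation p (\<lambda>_. c)"
    using assms by (intro integral_cong_AE) (auto simp: AE_measure_pmf_iff)
  then show ?thesis by simp
qed

lemma exp_bind_fin:
  fixes h :: "'b \<Rightarrow> real"
  assumes "finite (set_pmf p)" "\<And>x. x \<in> set_pmf p \<Longrightarrow> finite (set_pmf (f x))"
  shows "measure_pmf.expectation (p \<bind> f) h = measure_pmf.expectation p (\<lambda>x. measure_pmf.expectation (f x) h)"
proof -
  have "measure_pmf.expectation (p \<bind> f) h = (\<Sum>a\<in>set_pmf p. pmf p a *\<^sub>R measure_pmf.expectation (f a) h)"
    using assms by (intro pmf_expectation_bind) auto
  also have "\<dots> = measure_pmf.expectation p (\<lambda>x. measure_pmf.expectation (f x) h)"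
    using assms by (subst integral_measure_pmf[of "set_pmf p"]) auto
  finally show ?thesis .
qed

lemma exp_plus1:
  fixes h :: "'b \<Rightarrow> real"
  assumes "finite (set_pmf q)"
  shows "measure_pmf.expectation q (\<lambda>x. 1 + h x) = 1 + measure_pmf.expectation q h"
  using assms by (simp add: Bochner_Integration.integral_add integrable_measure_pmf_finite)

definition Cr :: "nat \<Rightarrow> nat \<Rightarrow> real" where
  "Cr n i = (\<Sum>m\<in>{i..<n}. real (unif_cost (Suc m)))"

function Ef :: "(nat \<Rightarrow> real) \<Rightarrow> nat \<Rightarrow> nat \<Rightarrow> real" where
  "Ef f u v = (if u = 0 then f (u+v) else Ef f (u-1) v) / 2 + (if v = 0 then f (u+v) else Ef f u (v-1)) / 2"
  by pat_completeness auto
termination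
  by (relation "Wellfounded.measure (\<lambda>(f, u, v). u + v)") auto

declare Ef.simps[simp del] merge_loop1.simps[simp del] merge_loop2.simps[simp del]

lemma loop2_cost:
  "x \<in> set_pmf (merge_loop2 T 0 i n) \<Longrightarrow> real (snd x) = Cr n i"
proof (induction T "0::nat" i n arbitrary: x rule: merge_loop2.induct)
  case (1 T i n)
  show ?case
  proof (cases "i < n")
    case True
    from "1.prems" True obtain m y where m: "m \<in> {0..i}" and y: "y \<in> set_pmf (merge_loop2 (swap T i m) 0 (i+1) n)"
      and x: "x = (fst y, snd y + unif_cost (card {0..i}))"
      by (subst (asm) merge_loop2.simps) (auto split: prod.splits)
    have "real (snd y) = Cr n (i+1)" using "1.hyps"[OF True _ y] m by simp
    moreover have "Cr n i = real (unif_cost (Suc i)) + Cr n (i+1)"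
      unfolding Cr_def using True by (simp add: sum.atLeast_Suc_lessThan)
    ultimately show ?thesis using x by simp
  next
    case False
    then show ?thesis using "1.prems" by (subst (asm) merge_loop2.simps) (simp add: Cr_def)
  qed
qed

lemma loop2_finite: "finite (set_pmf (merge_loop2 T 0 i n))"
proof (induction T "0::nat" i n rule: merge_loop2.induct)
  case (1 T i n)
  then show ?case by (subst merge_loop2.simps) auto
qed

lemma loop1_fin: "finite (set_pmf (merge_loop1 T i j n))"
proof (induction T i j n rule: merge_loop1.induct)
  case (1 T i j n)
  have "set_pmf (merge_loop1 T i j n) = (\<Union>b\<in>UNIV. set_pmf (if \<not> b then
            (if j \<le> i then return_pmf (T, i, 1)
             else map_pmf (\<lambda>(T', i', c). (T', i', c + 1)) (merge_loop1 T (i + 1) j n))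
          else
            (if n \<le> j then return_pmf (T, i, 1)
             else map_pmf (\<lambda>(T', i', c). (T', i', c + 1)) (merge_loop1 (swap T i j) (i + 1) (j + 1) n))))"
    by (subst merge_loop1.simps) simp
  also have "finite \<dots>" using 1 by (auto simp: UNIV_bool)
  finally show ?case .
qed


lemma map_add1_exp:
  "finite (set_pmf q) \<Longrightarrow> measure_pmf.expectation (map_pmf (\<lambda>(T', i', c). (T', i', c + 1)) q) (\<lambda>(T',i',c). real c + Cr n i')
    = 1 + measure_pmf.expectation q (\<lambda>(T',i',c). real c + Cr n i')"
  by (subst exp_plus1[symmetric]) (auto simp: split_beta algebra_simps)

lemma loop1_exp:
  assumes "i \<le> j" "j \<le> n"
  shows "measure_pmf.expectation (merge_loop1 T i j n) (\<lambda>(T',i',c). real c + Cr n i')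
     = real ((j-i)+(n-j)) + 1 - Ef real (j-i) (n-j) + Ef (\<lambda>d. Cr n (n-d)) (j-i) (n-j)"
  using assms
proof (induction T i j n rule: merge_loop1.induct)
  case (1 T i j n)
  define u where "u = j - i"
  define v where "v = n - j"
  have iu: "i = n - (u+v)" using 1 by (simp add: u_def v_def)
  let ?h = "(\<lambda>(T',i',c). real c + Cr n i')"
  let ?F = "\<lambda>b. (if \<not> b then
            (if j \<le> i then return_pmf (T, i, 1)
             else map_pmf (\<lambda>(T', i', c). (T', i', c + 1)) (merge_loop1 T (i + 1) j n))
          else
            (if n \<le> j then return_pmf (T, i, 1)
             else map_pmf (\<lambda>(T', i', c). (T', i', c + 1)) (merge_loop1 (swap T i j) (i + 1) (j + 1) n)))"
  have "measure_pmf.expectation (merge_loop1 T i j n) ?h = measure_pmf.expectation (bernoulli_pmf (1/2) \<bind> ?F) ?h"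
    by (subst merge_loop1.simps) simp
  also have "\<dots> = measure_pmf.expectation (bernoulli_pmf (1/2)) (\<lambda>b. measure_pmf.expectation (?F b) ?h)"
    by (rule exp_bind_fin) (auto simp: loop1_fin)
  also have "\<dots> = measure_pmf.expectation (?F True) ?h / 2 + measure_pmf.expectation (?F False) ?h / 2"
    by simp
  finally have E: "measure_pmf.expectation (merge_loop1 T i j n) ?h = measure_pmf.expectation (?F True) ?h / 2 + measure_pmf.expectation (?F False) ?h / 2" .
  have A: "measure_pmf.expectation (?F False) ?h = real (u+v) + 1 - (if u = 0 then real (u+v) else Ef real (u-1) v)
                + (if u = 0 then Cr n (n - (u+v)) else Ef (\<lambda>d. Cr n (n-d)) (u-1) v)"
  proof (cases "j \<le> i")
    case True
    then have "u = 0" using u_def by simp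
    then show ?thesis using True iu by simp
  next
    case False
    then have u0: "u \<noteq> 0" using u_def by simp
    have "measure_pmf.expectation (?F False) ?h = 1 + (real ((j-(i+1))+(n-j)) + 1 - Ef real (j-(i+1)) (n-j) + Ef (\<lambda>d. Cr n (n-d)) (j-(i+1)) (n-j))"
      using False "1.IH"(1)[of False] "1.prems" by (simp only: if_True if_False not_True_eq_False not_False_eq_True, subst map_add1_exp[OF loop1_fin]) simp
    also have "\<dots> = real (u+v) + 1 - Ef real (u-1) v + Ef (\<lambda>d. Cr n (n-d)) (u-1) v"
      using False "1.prems" u0 by (simp add: u_def v_def)
    finally show ?thesis using u0 by simp
  qed
  have B: "measure_pmf.expectation (?F True) ?h = real (u+v) + 1 - (if v = 0 then real (u+v) else Ef real u (v-1))
                + (if v = 0 then Cr n (n - (u+v)) else Ef (\<lambda>d. Cr n (n-d)) u (v-1))"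
  proof (cases "n \<le> j")
    case True
    then have "v = 0" using v_def by simp
    then show ?thesis using True iu by simp
  next
    case False
    then have v0: "v \<noteq> 0" using v_def by simp
    have "measure_pmf.expectation (?F True) ?h = 1 + (real ((j+1-(i+1))+(n-(j+1))) + 1 - Ef real (j+1-(i+1)) (n-(j+1)) + Ef (\<lambda>d. Cr n (n-d)) (j+1-(i+1)) (n-(j+1)))"
      using False "1.IH"(2)[of True] "1.prems" by (simp only: if_True if_False not_True_eq_False not_False_eq_True, subst map_add1_exp[OF loop1_fin]) simp
    also have "\<dots> = real (u+v) + 1 - Ef real u (v-1) + Ef (\<lambda>d. Cr n (n-d)) u (v-1)"
      using False "1.prems" v0 by (simp add: u_def v_def)
    finally show ?thesis using v0 by simp
  qed
  have R: "Ef real u v = (if u = 0 then real (u+v) else Ef real (u-1) v) / 2 + (if v = 0 then real (u+v) else Ef real u (v-1)) / 2"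
     "Ef (\<lambda>d. Cr n (n-d)) u v = (if u = 0 then Cr n (n-(u+v)) else Ef (\<lambda>d. Cr n (n-d)) (u-1) v) / 2 + (if v = 0 then Cr n (n-(u+v)) else Ef (\<lambda>d. Cr n (n-d)) u (v-1)) / 2"
    by (rule Ef.simps)+
  show ?case unfolding E A B u_def[symmetric] v_def[symmetric] R by (simp add: field_simps)
qed


lemma expected_bits_eq:
  "expected_bits T 0 k k = real (2*k) + 1 - Ef real k k + Ef (\<lambda>d. Cr (2*k) (2*k-d)) k k"
proof -
  let ?p = "merge_loop1 T 0 k (2*k)"
  let ?g = "\<lambda>(T1, i, c1). merge_loop2 T1 0 i (2*k) \<bind> (\<lambda>(T2, c2). return_pmf (T2, c1 + c2))"
  have m: "merge T 0 k k = ?p \<bind> ?g"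
    unfolding merge_def by (simp add: mult_2)
  have fin: "finite (set_pmf (?g x))" for x
    using loop2_finite by (auto simp: split_beta)
  have "expected_bits T 0 k k = measure_pmf.expectation (?p \<bind> ?g) (\<lambda>(T',c). real c)"
    unfolding expected_bits_def m ..
  also have "\<dots> = measure_pmf.expectation ?p (\<lambda>x. measure_pmf.expectation (?g x) (\<lambda>(T',c). real c))"
    by (rule exp_bind_fin) (auto simp: loop1_fin fin)
  also have "\<dots> = measure_pmf.expectation ?p (\<lambda>(T',i',c). real c + Cr (2*k) i')"
  proof (intro Bochner_Integration.integral_cong refl)
    fix x :: "'a list \<times> nat \<times> nat"
    obtain T1 i c1 where x: "x = (T1, i, c1)" by (cases x) auto
    show "measure_pmf.expectation (?g x) (\<lambda>(T',c). real c) = (\<lambda>(T',i',c). real c + Cr (2*k) i') x"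
      unfolding x by (auto intro!: exp_const_on_support dest!: loop2_cost)
  qed
  also have "\<dots> = real (2*k) + 1 - Ef real k k + Ef (\<lambda>d. Cr (2*k) (2*k-d)) k k"
    by (subst loop1_exp) auto
  finally show ?thesis .
qed

lemma Ef_eq: "Ef f u v = (if u = 0 then f (u+v) else Ef f (u-1) v) / 2 + (if v = 0 then f (u+v) else Ef f u (v-1)) / 2"
  by (rule Ef.simps)

lemma Ef_lin: "Ef (\<lambda>d. a * f d + b * g d) u v = a * Ef f u v + b * Ef g u v"
proof (induction "u+v" arbitrary: u v rule: less_induct)
  case less
  show ?case
    apply (subst (1 2 3) Ef_eq)
    using less[of "u-1" v] less[of u "v-1"]
    by (cases "u = 0"; cases "v = 0"; simp add: field_simps)
qed

lemma Ef_const: "Ef (\<lambda>d. c) u v = c"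
proof (induction "u+v" arbitrary: u v rule: less_induct)
  case less
  show ?case
    apply (subst Ef_eq)
    using less[of "u-1" v] less[of u "v-1"]
    by (cases "u = 0"; cases "v = 0"; simp add: algebra_simps)
qed

lemma Ef_mono: "(\<And>d. d \<le> max u v \<Longrightarrow> f d \<le> g d) \<Longrightarrow> Ef f u v \<le> Ef g u v"
proof (induction "u+v" arbitrary: u v rule: less_induct)
  case less
  have a: "u \<noteq> 0 \<Longrightarrow> Ef f (u-1) v \<le> Ef g (u-1) v"
    using less(1)[of "u-1" v] less(2) by fastforce
  have b: "v \<noteq> 0 \<Longrightarrow> Ef f u (v-1) \<le> Ef g u (v-1)"
    using less(1)[of u "v-1"] less(2) by fastforce
  show ?case
    apply (subst (1 2) Ef_eq)
    using a b less(2)[of "u+v"]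
    by (cases "u = 0"; cases "v = 0"; simp)
qed

lemma Ef_nonneg: "(\<And>d. 0 \<le> f d) \<Longrightarrow> 0 \<le> Ef f u v"
  using Ef_mono[of u v "\<lambda>_. 0" f] Ef_const[of 0 u v] by simp

lemma Ef_sq: "Ef (\<lambda>d. real d ^ 2) u v = (real u - real v)^2 + real u + real v - 3 * Ef real u v"
proof (induction "u+v" arbitrary: u v rule: less_induct)
  case less
  show ?case
    apply (subst (1 2) Ef_eq)
    using less[of "u-1" v] less[of u "v-1"]
    by (cases "u = 0"; cases "v = 0"; simp add: algebra_simps power2_eq_square of_nat_diff)
qed

definition H :: "real \<Rightarrow> real \<Rightarrow> real" where
 "H x y = (x - y)^4 + 6 * (x + y) * (x - y)^2 + 3 * (x + y)^2"
lemma H_int: "(H (x-1) y + H x (y-1)) / 2 = H x y - 2"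
  unfolding H_def by (simp add: field_simps power2_eq_square power4_eq_xxxx)
lemma H_sym: "H x y = H y x"
  unfolding H_def by (simp add: field_simps power2_eq_square power4_eq_xxxx)
lemma H_bd: "0 \<le> w \<Longrightarrow> (w+1)^4/2 + H 0 w / 2 \<le> H 0 (w+1)"
  unfolding H_def by (simp add: field_simps power2_eq_square power3_eq_cube power4_eq_xxxx add_nonneg_nonneg mult_nonneg_nonneg)

lemma Ef_4: "Ef (\<lambda>d. real d ^ 4) u v \<le> H (real u) (real v)"
proof (induction "u+v" arbitrary: u v rule: less_induct)
  case less
  consider "u = 0" "v = 0" | "u = 0" "v > 0" | "u > 0" "v = 0" | "u > 0" "v > 0" by auto
  then show ?case
  proof cases
    case 1 then show ?thesis by (subst Ef_eq) (simp add: H_def)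
  next
    case 2
    have "Ef (\<lambda>d. real d ^ 4) u v = real v ^ 4 / 2 + Ef (\<lambda>d. real d ^ 4) 0 (v-1) / 2"
      using 2 by (subst Ef_eq) simp
    also have "\<dots> \<le> real v ^ 4 / 2 + H 0 (real v - 1) / 2"
      using less[of 0 "v-1"] 2 by (simp add: of_nat_diff)
    also have "\<dots> \<le> H 0 (real v)"
      using H_bd[of "real v - 1"] 2 by simp
    finally show ?thesis using 2 by simp
  next
    case 3
    have "Ef (\<lambda>d. real d ^ 4) u v = real u ^ 4 / 2 + Ef (\<lambda>d. real d ^ 4) (u-1) 0 / 2"
      using 3 by (subst Ef_eq) simp
    also have "\<dots> \<le> real u ^ 4 / 2 + H 0 (real u - 1) / 2"
      using less[of "u-1" 0] 3 by (simp add: of_nat_diff H_sym[of _ 0])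
    also have "\<dots> \<le> H 0 (real u)"
      using H_bd[of "real u - 1"] 3 by simp
    finally show ?thesis using 3 by (simp add: H_sym[of _ 0])
  next
    case 4
    have "Ef (\<lambda>d. real d ^ 4) u v = Ef (\<lambda>d. real d ^ 4) (u-1) v / 2 + Ef (\<lambda>d. real d ^ 4) u (v-1) / 2"
      using 4 by (subst Ef_eq) simp
    also have "\<dots> \<le> H (real u - 1) (real v) / 2 + H (real u) (real v - 1) / 2"
      using less[of "u-1" v] less[of u "v-1"] 4 by (simp add: of_nat_diff)
    also have "\<dots> \<le> H (real u) (real v)"
      using H_int[of "real u" "real v"] by simp
    finally show ?thesis .
  qed
qed


lemma pt_upper: "0 < A \<Longrightarrow> (x::real) \<le> (1/(2*A)) * x^2 + (A/2) * 1"
proof -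
  assume A: "0 < A"
  have "(1/(2*A)) * x^2 + (A/2) * 1 - x = (x - A)^2 / (2*A)"
    using A by (simp add: field_simps power2_eq_square)
  also have "\<dots> \<ge> 0" using A by simp
  finally show ?thesis by simp
qed

lemma pt_lower: "0 \<le> x \<Longrightarrow> 0 < A \<Longrightarrow> (1/A) * x^2 + (-4/(27*A^3)) * x^4 \<le> (x::real)"
proof -
  assume x: "0 \<le> x" and A: "0 < A"
  have "x - ((1/A) * x^2 + (-4/(27*A^3)) * x^4) = x*(2*x-3*A)^2*(x+3*A)/(27*A^3)"
    using A by (simp add: field_simps power2_eq_square power3_eq_cube power4_eq_xxxx)
  also have "\<dots> \<ge> 0" using A x by simp
  finally show ?thesis by simp
qed

lemma E1_nonneg: "0 \<le> Ef real u v"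
  by (rule Ef_nonneg) simp

lemma E1_upper:
  assumes "k \<ge> 1"
  shows "Ef real k k \<le> sqrt (2 * real k)"
proof -
  define A where "A = sqrt (2 * real k)"
  have A: "A > 0" using assms by (simp add: A_def)
  have A2: "A^2 = 2 * real k" by (simp add: A_def)
  have "Ef real k k \<le> Ef (\<lambda>d. (1/(2*A)) * real d ^ 2 + (A/2) * 1) k k"
    by (rule Ef_mono) (rule pt_upper[OF A])
  also have "\<dots> = (1/(2*A)) * Ef (\<lambda>d. real d ^ 2) k k + (A/2) * Ef (\<lambda>d. 1) k k"
    by (rule Ef_lin)
  also have "\<dots> = (1/(2*A)) * (2 * real k - 3 * Ef real k k) + A/2"
    by (simp add: Ef_sq Ef_const)
  also have "\<dots> \<le> (1/(2*A)) * (2 * real k) + A/2"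
    using A E1_nonneg[of k k] by (simp add: field_simps)
  also have "\<dots> = A"
    using A A2 by (simp add: field_simps power2_eq_square)
  finally show ?thesis by (simp add: A_def)
qed

lemma E1_lower:
  assumes "k \<ge> 1"
  shows "Ef real k k \<ge> 14 / 45 * sqrt (real k)"
proof -
  define r where "r = sqrt (real k)"
  define A where "A = 2 * r"
  have r1: "r \<ge> 1" using assms by (simp add: r_def)
  have A: "A > 0" using r1 by (simp add: A_def)
  have kr: "real k = r^2" by (simp add: r_def)
  define E where "E = Ef real k k"
  have E0: "E \<ge> 0" using E1_nonneg by (simp add: E_def)
  have "Ef (\<lambda>d. (1/A) * real d ^ 2 + (-4/(27*A^3)) * real d ^ 4) k k \<le> E"
    unfolding E_def by (rule Ef_mono) (rule pt_lower[OF _ A]; simp)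
  moreover have "Ef (\<lambda>d. (1/A) * real d ^ 2 + (-4/(27*A^3)) * real d ^ 4) k k
     = (1/A) * Ef (\<lambda>d. real d ^ 2) k k + (-4/(27*A^3)) * Ef (\<lambda>d. real d ^ 4) k k"
    by (rule Ef_lin)
  moreover have "Ef (\<lambda>d. real d ^ 4) k k \<le> 12 * r^4"
    using Ef_4[of k k] by (simp add: H_def kr power2_eq_square power4_eq_xxxx)
  moreover have "(-4/(27*A^3)) * Ef (\<lambda>d. real d ^ 4) k k \<ge> (-4/(27*A^3)) * (12 * r^4)"
    using A calculation(3) by (intro mult_left_mono_neg) auto
  ultimately have "E \<ge> (1/A) * (2*r^2 - 3*E) - 4/(27*A^3) * (12*r^4)"
    by (simp add: Ef_sq E_def kr)
  then have "E \<ge> (2*r^2 - 3*E)/(2*r) - 2/9 * r"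
    using r1 by (simp add: A_def field_simps power3_eq_cube power4_eq_xxxx power2_eq_square)
  then have "E * (2*r+3) \<ge> 14/9 * r^2"
    using r1 by (simp add: field_simps power2_eq_square)
  moreover have "E * (2*r+3) \<le> E * (5*r)"
    using E0 r1 by (intro mult_left_mono) auto
  ultimately have "E * (5 * r) \<ge> 14/9 * r^2" by linarith
  then have "E \<ge> 14/45 * r"
    using r1 by (simp add: field_simps power2_eq_square)
  then show ?thesis by (simp add: E_def r_def)
qed


lemma uc_bounds:
  assumes "K \<ge> 1"
  shows "log 2 (real K) \<le> real (unif_cost K)" "real (unif_cost K) \<le> log 2 (real K) + 1"
proof -
  have l0: "log 2 (real K) \<ge> 0" using assms by simp
  have "real (unif_cost K) = real_of_int \<lceil>log 2 (real K)\<rceil>"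
    unfolding unif_cost_def using l0 by simp
  then show "log 2 (real K) \<le> real (unif_cost K)" "real (unif_cost K) \<le> log 2 (real K) + 1"
    by (simp_all add: le_of_int_ceiling)
qed

lemma C_bounds:
  assumes "d \<le> k"
  shows "real d * log 2 (real k + 1) \<le> Cr (2*k) (2*k - d)"
        "Cr (2*k) (2*k - d) \<le> real d * (log 2 (2 * real k) + 1)"
proof -
  have card: "card {2*k-d..<2*k} = d" using assms by simp
  have lo: "log 2 (real k + 1) \<le> real (unif_cost (Suc m))" if "m \<in> {2*k-d..<2*k}" for m
  proof -
    have "log 2 (real k + 1) \<le> log 2 (real (Suc m))" using that assms by auto
    also have "\<dots> \<le> real (unif_cost (Suc m))" by (rule uc_bounds) simp
    finally show ?thesis .
  qed
  have hi: "real (unif_cost (Suc m)) \<le> log 2 (2 * real k) + 1" if "m \<in> {2*k-d..<2*k}" for m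
  proof -
    have "real (unif_cost (Suc m)) \<le> log 2 (real (Suc m)) + 1" by (rule uc_bounds) simp
    also have "\<dots> \<le> log 2 (2 * real k) + 1" using that assms by auto
    finally show ?thesis .
  qed
  show "real d * log 2 (real k + 1) \<le> Cr (2*k) (2*k - d)"
    unfolding Cr_def using sum_bounded_below[OF lo, of "{2*k-d..<2*k}"] card by simp
  show "Cr (2*k) (2*k - d) \<le> real d * (log 2 (2 * real k) + 1)"
    unfolding Cr_def using sum_bounded_above[OF hi, of "{2*k-d..<2*k}"] card by simp
qed

lemma Ef_scale: "Ef (\<lambda>d. a * f d) u v = a * Ef f u v"
  using Ef_lin[of a f 0 f u v] by simp

lemma X_bounds:
  assumes "k \<ge> 1"
  shows "expected_bits T 0 k k - real (2*k) \<le> 1 + log 2 (2 * real k) * sqrt (2 * real k)"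
        "expected_bits T 0 k k - real (2*k) \<ge> 1 + (log 2 (real k + 1) - 1) * (14 / 45 * sqrt (real k))"
proof -
  define E where "E = Ef real k k"
  have E0: "E \<ge> 0" using E1_nonneg by (simp add: E_def)
  have X: "expected_bits T 0 k k - real (2*k) = 1 - E + Ef (\<lambda>d. Cr (2*k) (2*k-d)) k k"
    by (simp add: expected_bits_eq E_def)
  have "Ef (\<lambda>d. Cr (2*k) (2*k-d)) k k \<le> Ef (\<lambda>d. (log 2 (2 * real k) + 1) * real d) k k"
    by (rule Ef_mono) (use C_bounds(2) in \<open>auto simp: mult.commute\<close>)
  then have up: "Ef (\<lambda>d. Cr (2*k) (2*k-d)) k k \<le> (log 2 (2 * real k) + 1) * E"
    by (simp add: Ef_scale E_def)
  have "Ef (\<lambda>d. log 2 (real k + 1) * real d) k k \<le> Ef (\<lambda>d. Cr (2*k) (2*k-d)) k k"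
    by (rule Ef_mono) (use C_bounds(1) in \<open>auto simp: mult.commute\<close>)
  then have lo: "log 2 (real k + 1) * E \<le> Ef (\<lambda>d. Cr (2*k) (2*k-d)) k k"
    by (simp add: Ef_scale E_def)
  have l2: "log 2 (2 * real k) \<ge> 0" using assms by simp
  have "E \<le> sqrt (2 * real k)" using E1_upper[OF assms] by (simp add: E_def)
  then have "log 2 (2 * real k) * E \<le> log 2 (2 * real k) * sqrt (2 * real k)"
    using l2 by (rule mult_left_mono)
  then show "expected_bits T 0 k k - real (2*k) \<le> 1 + log 2 (2 * real k) * sqrt (2 * real k)"
    using X up by (simp add: algebra_simps)
  have l1: "log 2 (real k + 1) - 1 \<ge> 0" using assms by simp
  have "E \<ge> 14 / 45 * sqrt (real k)" using E1_lower[OF assms] by (simp add: E_def)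
  then have "(log 2 (real k + 1) - 1) * E \<ge> (log 2 (real k + 1) - 1) * (14 / 45 * sqrt (real k))"
    using l1 by (rule mult_left_mono)
  then show "expected_bits T 0 k k - real (2*k) \<ge> 1 + (log 2 (real k + 1) - 1) * (14 / 45 * sqrt (real k))"
    using X lo by (simp add: algebra_simps)
qed


lemma log_part:
  assumes "k \<ge> (6::nat)"
  shows "ln (2 * real k) / (2 * ln 2) \<le> log 2 (real k + 1) - 1"
proof -
  have k: "real k \<ge> 6" using assms by simp
  have p: "real k * (real k - 6) \<ge> 0" using k by simp
  have e: "((real k + 1) / 2)^2 - 2 * real k = (real k * (real k - 6) + 1) / 4"
    by (simp add: power2_eq_square algebra_simps add_divide_distrib)
  have "2 * real k \<le> ((real k + 1) / 2)^2"
  proof -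
    have "(real k * (real k - 6) + 1) / 4 \<ge> 0" using p by simp
    then show ?thesis using e by linarith
  qed
  then have "ln (2 * real k) \<le> ln (((real k + 1) / 2)^2)"
    using k by (subst ln_le_cancel_iff) auto
  also have "\<dots> = 2 * (ln (real k + 1) - ln 2)"
    using k by (simp add: ln_realpow ln_div)
  finally have "ln (2 * real k) \<le> 2 * (ln (real k + 1) - ln 2)" .
  then show ?thesis by (simp add: log_def field_simps)
qed

lemma g_ge1:
  assumes "k \<ge> (6::nat)"
  shows "1 \<le> sqrt (2 * real k) * ln (2 * real k)"
proof -
  have k: "real k \<ge> 6" using assms by simp
  have "exp 1 \<le> 2 * real k" using exp_le k by linarith
  then have "ln (exp 1) \<le> ln (2 * real k)" using k by (subst ln_le_cancel_iff) auto
  then have l: "1 \<le> ln (2 * real k)" by simp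
  have s: "1 \<le> sqrt (2 * real k)" using k by simp
  show ?thesis using mult_mono[OF s l] by simp
qed

theorem mainTheorem2:
  fixes T :: "nat \<Rightarrow> 'a list"
  assumes "\<And>k. length (T k) = 2 * k"
  shows "(\<lambda>k. expected_bits (T k) 0 k k - real (2 * k))
           \<in> \<Theta>(\<lambda>k. sqrt (real (2 * k)) * ln (real (2 * k)))"
proof (rule bigthetaI')
  show "(7 / (90 * ln 2) :: real) > 0" by simp
  show "(1 + 1 / ln 2 :: real) > 0" by (simp add: add_pos_pos)
  show "eventually (\<lambda>k. 7 / (90 * ln 2) * norm (sqrt (real (2 * k)) * ln (real (2 * k)))
          \<le> norm (expected_bits (T k) 0 k k - real (2 * k)) \<and>
          norm (expected_bits (T k) 0 k k - real (2 * k)) \<le> (1 + 1 / ln 2) * norm (sqrt (real (2 * k)) * ln (real (2 * k)))) at_top"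
  proof (rule eventually_at_top_linorderI[of 6])
    fix k :: nat assume k6: "k \<ge> 6"
    then have k1: "k \<ge> 1" by simp
    define X where "X = expected_bits (T k) 0 k k - real (2 * k)"
    define S where "S = sqrt (2 * real k)"
    define L where "L = ln (2 * real k)"
    have g1: "1 \<le> S * L" using g_ge1[OF k6] by (simp add: S_def L_def)
    have L0: "L \<ge> 0" using k1 by (simp add: L_def)
    have S0: "S \<ge> 0" by (simp add: S_def)
    have Xu: "X \<le> 1 + log 2 (2 * real k) * S" using X_bounds(1)[OF k1, of "T k"] by (simp add: X_def S_def)
    have Xl: "X \<ge> 1 + (log 2 (real k + 1) - 1) * (14 / 45 * sqrt (real k))"
      using X_bounds(2)[OF k1, of "T k"] by (simp add: X_def)
    have a: "L / (2 * ln 2) \<le> log 2 (real k + 1) - 1" using log_part[OF k6] by (simp add: L_def)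
    have b: "14 / 45 * (S / 2) \<le> 14 / 45 * sqrt (real k)"
    proof -
      have "S = sqrt 2 * sqrt (real k)" by (simp add: S_def real_sqrt_mult)
      moreover have "sqrt 2 \<le> (2::real)"
        using real_sqrt_le_mono[of 2 "2^2"] by simp
      ultimately show ?thesis using mult_right_mono[of "sqrt 2" 2 "sqrt (real k)"] by (simp add: mult.commute)
    qed
    have "L / (2 * ln 2) * (14 / 45 * (S / 2)) \<le> (log 2 (real k + 1) - 1) * (14 / 45 * sqrt (real k))"
      using a b L0 S0 k1 by (intro mult_mono) auto
    moreover have "7 / (90 * ln 2) * (S * L) = L / (2 * ln 2) * (14 / 45 * (S / 2))"
      by (simp add: field_simps)
    ultimately have low: "7 / (90 * ln 2) * (S * L) \<le> X" using Xl by linarith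
    have "log 2 (2 * real k) * S = (S * L) / ln 2" by (simp add: log_def L_def)
    moreover have "(1 + 1 / ln 2) * (S * L) = S * L + (S * L) / ln 2"
      by (simp add: algebra_simps)
    ultimately have up: "X \<le> (1 + 1 / ln 2) * (S * L)" using Xu g1 by linarith
    have "0 \<le> 7 / (90 * ln 2) * (S * L)" using g1 by simp
    then have Xp: "X \<ge> 0" using low by linarith
    show "7 / (90 * ln 2) * norm (sqrt (real (2 * k)) * ln (real (2 * k)))
          \<le> norm (expected_bits (T k) 0 k k - real (2 * k)) \<and>
          norm (expected_bits (T k) 0 k k - real (2 * k)) \<le> (1 + 1 / ln 2) * norm (sqrt (real (2 * k)) * ln (real (2 * k)))"
      using low up Xp g1 unfolding X_def S_def L_def by simp
  qed
qed

end
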